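(* There exists $\delta_0>0$ such that for every $0\le \delta<\delta_0$ the following holds: there exists $\varepsilon=\varepsilon(\delta)>0$ such that for every Boolean function $f:\{0,1\}^n\to\{0,1\}$ (any $n$) there exists a $\delta$-noisy circuit $C$ composed of 3MIN gates with $n$ inputs such that for all $(x_1,\dots,x_n)\in\{0,1\}^n$, $\mathbb{P}(C(x_1,\dots,x_n)\neq f(x_1,\dots,x_n))\le\frac12-\varepsilon$. That is, provided $\delta$ is sufficiently small, any Boolean function can be reliably computed by a $\delta$-noisy circuit composed of 3-input minority gates.
   Context: A Boolean circuit is a directed acyclic graph whose source nodes are either input variables $x_1,\dots,x_n$ or constants $0$ or $1$ (constants are noiseless), whose other vertices are logic gates computing a Boolean function of their incoming edges and sending the result along all outgoing edges, and which has a single sink, the output. A 3MIN (3-input minority) gate outputs $1$ if at most one of its three inputs equals $1$, and $0$ otherwise (the negation of majority). A gate is $\delta$-noisy if, given its inputs, it outputs the wrong value with probability $\delta$; a $\delta$-noisy circuit has all gates $\delta$-noisy, malfunctioning independently. *)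

theory Defs
  imports Complex_Main
begin

datatype wire = Var nat | Const bool | Gate nat

text \<open>A 3MIN gate is given by its three input wires.  A circuit is the list of its
  gates in topological order; its output (the sink) is the last gate.\<close>
type_synonym gate = "wire \<times> wire \<times> wire"
type_synonym circuit = "gate list"

definition min3 :: "bool \<Rightarrow> bool \<Rightarrow> bool \<Rightarrow> bool" where
  "min3 a b c = (\<not> ((a \<and> b) \<or> (a \<and> c) \<or> (b \<and> c)))"

definition wire_ok :: "nat \<Rightarrow> nat \<Rightarrow> wire \<Rightarrow> bool" where
  "wire_ok n j w = (case w of Var i \<Rightarrow> i < n | Const b \<Rightarrow> True | Gate k \<Rightarrow> k < j)"

definition wf_circuit :: "nat \<Rightarrow> circuit \<Rightarrow> bool" where
  "wf_circuit n C = (C \<noteq> [] \<and>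
     (\<forall>j < length C. case C ! j of (a, b, c) \<Rightarrow>
        wire_ok n j a \<and> wire_ok n j b \<and> wire_ok n j c))"

definition wire_val :: "bool list \<Rightarrow> bool list \<Rightarrow> wire \<Rightarrow> bool" where
  "wire_val xs vs w = (case w of Var i \<Rightarrow> xs ! i | Const b \<Rightarrow> b | Gate k \<Rightarrow> vs ! k)"

text \<open>Evaluation under an error pattern es: gate j outputs the negation of the
  correct 3MIN value iff es ! j.  vs accumulates the gate values computed so far.\<close>
fun run :: "bool list \<Rightarrow> bool list \<Rightarrow> circuit \<Rightarrow> bool list \<Rightarrow> bool list" where
  "run xs es [] vs = vs"
| "run xs es ((a, b, c) # gs) vs =
     run xs es gs (vs @ [min3 (wire_val xs vs a) (wire_val xs vs b) (wire_val xs vs c) \<noteq> es ! length vs])"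

definition circ_out :: "circuit \<Rightarrow> bool list \<Rightarrow> bool list \<Rightarrow> bool" where
  "circ_out C xs es = last (run xs es C [])"

definition pattern_prob :: "real \<Rightarrow> bool list \<Rightarrow> real" where
  "pattern_prob \<delta> es = (\<Prod>i<length es. if es ! i then \<delta> else 1 - \<delta>)"

definition err_prob :: "real \<Rightarrow> circuit \<Rightarrow> (bool list \<Rightarrow> bool) \<Rightarrow> bool list \<Rightarrow> real" where
  "err_prob \<delta> C f xs =
     (\<Sum>es \<in> {es. length es = length C \<and> circ_out C xs es \<noteq> f xs}. pattern_prob \<delta> es)"

end

theory Submission imports Defs begin

datatype tr = V nat | K bool | Nd tr tr tr

fun sz :: "tr \<Rightarrow> nat" where
  "sz (V i) = 0" | "sz (K b) = 0" | "sz (Nd a b c) = Suc (sz a + sz b + sz c)"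

fun teval :: "bool list \<Rightarrow> tr \<Rightarrow> bool list \<Rightarrow> bool" where
  "teval xs (V i) es = xs ! i"
| "teval xs (K b) es = b"
| "teval xs (Nd a b c) es = (min3 (teval xs a es) (teval xs b (drop (sz a) es))
      (teval xs c (drop (sz a + sz b) es)) \<noteq> es ! (sz a + sz b + sz c))"

fun outw :: "tr \<Rightarrow> nat \<Rightarrow> wire" where
  "outw (V i) off = Var i" | "outw (K b) off = Const b"
| "outw (Nd a b c) off = Gate (off + sz a + sz b + sz c)"

fun gates :: "tr \<Rightarrow> nat \<Rightarrow> circuit" where
  "gates (V i) off = []" | "gates (K b) off = []"
| "gates (Nd a b c) off = gates a off @ gates b (off + sz a) @ gates c (off + sz a + sz b)
     @ [(outw a off, outw b (off + sz a), outw c (off + sz a + sz b))]"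

lemma length_gates[simp]: "length (gates t off) = sz t"
  by (induction t arbitrary: off) auto

lemma run_append: "run xs es (g1 @ g2) vs = run xs es g2 (run xs es g1 vs)"
proof (induction g1 arbitrary: vs)
  case (Cons g gs) then show ?case by (cases g) auto
qed simp

lemma run_single: "run xs es [(a,b,c)] vs = vs @ [min3 (wire_val xs vs a) (wire_val xs vs b) (wire_val xs vs c) \<noteq> es ! length vs]"
  by simp

lemma teval_prefix: "sz t \<le> length es \<Longrightarrow> teval xs t (es @ more) = teval xs t es"
  by (induction t arbitrary: es) (auto simp: nth_append)

lemma run_gates:
  assumes "length vs = off" "off + sz t \<le> length es"
  shows "\<exists>R. run xs es (gates t off) vs = vs @ R \<and> length R = sz t \<and>
     (\<forall>W. wire_val xs (vs @ R @ W) (outw t off) = teval xs t (drop off es))"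
  using assms
proof (induction t arbitrary: off vs)
  case (V i) then show ?case by (auto simp: wire_val_def)
next
  case (K b) then show ?case by (auto simp: wire_val_def)
next
  case (Nd a b c)
  obtain Ra where A: "run xs es (gates a off) vs = vs @ Ra" "length Ra = sz a"
    "\<forall>W. wire_val xs (vs @ Ra @ W) (outw a off) = teval xs a (drop off es)"
    using Nd.IH(1)[of vs off] Nd.prems by auto
  obtain Rb where B: "run xs es (gates b (off + sz a)) (vs @ Ra) = (vs @ Ra) @ Rb" "length Rb = sz b"
    "\<forall>W. wire_val xs ((vs @ Ra) @ Rb @ W) (outw b (off + sz a)) = teval xs b (drop (off + sz a) es)"
    using Nd.IH(2)[of "vs @ Ra" "off + sz a"] Nd.prems A by auto
  obtain Rc where C: "run xs es (gates c (off + sz a + sz b)) (vs @ Ra @ Rb) = (vs @ Ra @ Rb) @ Rc" "length Rc = sz c"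
    "\<forall>W. wire_val xs ((vs @ Ra @ Rb) @ Rc @ W) (outw c (off + sz a + sz b)) = teval xs c (drop (off + sz a + sz b) es)"
    using Nd.IH(3)[of "vs @ Ra @ Rb" "off + sz a + sz b"] Nd.prems A B by auto
  define v where "v = (teval xs (Nd a b c) (drop off es))"
  have va: "wire_val xs (vs @ Ra @ Rb @ Rc) (outw a off) = teval xs a (drop off es)"
    using A(3)[rule_format, of "Rb @ Rc"] by simp
  have vb: "wire_val xs (vs @ Ra @ Rb @ Rc) (outw b (off + sz a)) = teval xs b (drop (sz a) (drop off es))"
    using B(3)[rule_format, of "Rc"] by (simp add: add.commute)
  have vc: "wire_val xs (vs @ Ra @ Rb @ Rc) (outw c (off + sz a + sz b)) = teval xs c (drop (sz a + sz b) (drop off es))"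
    using C(3)[rule_format, of "[]"] by (simp add: ac_simps)
  have ee: "es ! length (vs @ Ra @ Rb @ Rc) = drop off es ! (sz a + sz b + sz c)"
    using Nd.prems A B C by (simp add: add.assoc)
  have run: "run xs es (gates (Nd a b c) off) vs = vs @ (Ra @ Rb @ Rc @ [v])"
    using A B C va vb vc ee by (simp add: run_append v_def)
  show ?case
    apply (rule exI[of _ "Ra @ Rb @ Rc @ [v]"])
    using run A B C Nd.prems by (auto simp: wire_val_def nth_append v_def)
qed


fun vok :: "nat \<Rightarrow> tr \<Rightarrow> bool" where
  "vok n (V i) = (i < n)" | "vok n (K b) = True" | "vok n (Nd a b c) = (vok n a \<and> vok n b \<and> vok n c)"

fun gok :: "nat \<Rightarrow> nat \<Rightarrow> circuit \<Rightarrow> bool" where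
  "gok n off [] = True"
| "gok n off ((a,b,c) # gs) = (wire_ok n off a \<and> wire_ok n off b \<and> wire_ok n off c \<and> gok n (Suc off) gs)"

lemma gok_append: "gok n off (g1 @ g2) = (gok n off g1 \<and> gok n (off + length g1) g2)"
proof (induction g1 arbitrary: off)
  case (Cons g gs) then show ?case by (cases g) auto
qed simp

lemma gok_nth: "gok n off gs \<Longrightarrow> j < length gs \<Longrightarrow>
   (case gs ! j of (a,b,c) \<Rightarrow> wire_ok n (off + j) a \<and> wire_ok n (off + j) b \<and> wire_ok n (off + j) c)"
proof (induction gs arbitrary: off j)
  case (Cons g gs)
  show ?case
  proof (cases j)
    case 0 then show ?thesis using Cons.prems by (cases g) auto
  next
    case (Suc k)
    have "gok n (Suc off) gs" using Cons.prems by (cases g) auto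
    then have "case gs ! k of (a,b,c) \<Rightarrow> wire_ok n (Suc off + k) a \<and> wire_ok n (Suc off + k) b \<and> wire_ok n (Suc off + k) c"
      using Cons.IH[of "Suc off" k] Cons.prems Suc by simp
    then show ?thesis using Suc by simp
  qed
qed simp

lemma wire_ok_mono: "wire_ok n j w \<Longrightarrow> j \<le> j' \<Longrightarrow> wire_ok n j' w"
  by (auto simp: wire_ok_def split: wire.splits)

lemma gates_ok: "vok n t \<Longrightarrow> gok n off (gates t off) \<and> wire_ok n (off + sz t) (outw t off)"
proof (induction t arbitrary: off)
  case (Nd a b c)
  have A: "gok n off (gates a off)" "wire_ok n (off + sz a) (outw a off)" using Nd by auto
  have B: "gok n (off + sz a) (gates b (off + sz a))" "wire_ok n (off + sz a + sz b) (outw b (off + sz a))" using Nd by auto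
  have C: "gok n (off + sz a + sz b) (gates c (off + sz a + sz b))" "wire_ok n (off + sz a + sz b + sz c) (outw c (off + sz a + sz b))" using Nd by auto
  have "wire_ok n (off + sz a + sz b + sz c) (outw a off)" "wire_ok n (off + sz a + sz b + sz c) (outw b (off + sz a))"
    using A(2) B(2) wire_ok_mono by fastforce+
  then show ?case using A B C by (simp add: gok_append wire_ok_def add.assoc)
qed (auto simp: wire_ok_def)

lemma wf_gates: "vok n t \<Longrightarrow> t = Nd a b c \<Longrightarrow> wf_circuit n (gates t 0)"
  unfolding wf_circuit_def using gates_ok[of n t 0] gok_nth[of n 0 "gates t 0"] by auto

lemma circ_out_gates: "t = Nd a b c \<Longrightarrow> length es = sz t \<Longrightarrow> circ_out (gates t 0) xs es = teval xs t es"
proof -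
  assume t: "t = Nd a b c" and l: "length es = sz t"
  obtain R where R: "run xs es (gates t 0) [] = R" "length R = sz t"
     "\<forall>W. wire_val xs (R @ W) (outw t 0) = teval xs t es"
    using run_gates[of "[]" 0 t es xs] l by auto
  have "wire_val xs (R @ []) (outw t 0) = last R"
    using R(2) t by (cases R rule: rev_cases) (auto simp: wire_val_def nth_append)
  then show ?thesis using R(1) R(3)[rule_format, of "[]"] unfolding circ_out_def by simp
qed


definition EE :: "real \<Rightarrow> nat \<Rightarrow> (bool list \<Rightarrow> real) \<Rightarrow> real" where
  "EE d n h = (\<Sum>es \<in> {es. length es = n}. pattern_prob d es * h es)"

lemma fin_L: "finite {es::bool list. length es = n}"
  using finite_lists_length_eq[of "UNIV::bool set" n] by simp

lemma pp_conv: "pattern_prob d es = prod_list (map (\<lambda>e. if e then d else 1 - d) es)"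
proof (induction es)
  case Nil then show ?case by (simp add: pattern_prob_def)
next
  case (Cons x es)
  have "pattern_prob d (x # es) = (if x then d else 1 - d) * pattern_prob d es"
    unfolding pattern_prob_def by (simp only: length_Cons prod.lessThan_Suc_shift) simp
  then show ?case using Cons by simp
qed

lemma pp_append: "pattern_prob d (a @ b) = pattern_prob d a * pattern_prob d b"
  by (simp add: pp_conv)

lemma pp_nonneg: "0 \<le> d \<Longrightarrow> d \<le> 1 \<Longrightarrow> 0 \<le> pattern_prob d es"
  unfolding pattern_prob_def by (rule prod_nonneg) auto

lemma EE_cong: "(\<And>es. length es = n \<Longrightarrow> h es = g es) \<Longrightarrow> EE d n h = EE d n g"
  unfolding EE_def by (rule sum.cong) auto

lemma EE_split: "EE d (n + m) h = EE d n (\<lambda>a. EE d m (\<lambda>b. h (a @ b)))"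
proof -
  have bij: "bij_betw (\<lambda>(a,b). a @ b) ({es. length es = n} \<times> {es. length es = m}) {es::bool list. length es = n + m}"
    unfolding bij_betw_def
  proof
    show "inj_on (\<lambda>(a,b). a @ b) ({es. length es = n} \<times> {es::bool list. length es = m})"
      by (auto simp: inj_on_def)
    show "(\<lambda>(a,b). a @ b) ` ({es. length es = n} \<times> {es::bool list. length es = m}) = {es. length es = n + m}"
    proof (auto simp: image_def)
      fix es :: "bool list" assume "length es = n + m"
      then show "\<exists>a. length a = n \<and> (\<exists>b. length b = m \<and> es = a @ b)"
        by (intro exI[of _ "take n es"]) (auto intro!: exI[of _ "drop n es"])
    qed
  qed
  have "EE d (n + m) h = (\<Sum>p \<in> {es. length es = n} \<times> {es. length es = m}. pattern_prob d (fst p @ snd p) * h (fst p @ snd p))"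
    unfolding EE_def using sum.reindex_bij_betw[OF bij, of "\<lambda>es. pattern_prob d es * h es"]
    by (simp add: case_prod_beta)
  also have "\<dots> = (\<Sum>a \<in> {es. length es = n}. \<Sum>b \<in> {es. length es = m}. pattern_prob d (a @ b) * h (a @ b))"
    by (simp add: sum.cartesian_product case_prod_beta)
  also have "\<dots> = EE d n (\<lambda>a. EE d m (\<lambda>b. h (a @ b)))"
    unfolding EE_def by (simp add: pp_append sum_distrib_left mult.assoc)
  finally show ?thesis .
qed

lemma L1: "{es::bool list. length es = Suc 0} = {[False], [True]}"
  by (auto simp: length_Suc_conv)

lemma EE_1: "EE d 1 h = (1 - d) * h [False] + d * h [True]"
  unfolding EE_def by (simp add: L1 pattern_prob_def)

lemma EE_0: "EE d 0 h = h []"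
  unfolding EE_def by (simp add: pattern_prob_def)

lemma EE_const1: "EE d n (\<lambda>_. 1) = 1"
proof (induction n)
  case 0 then show ?case by (simp add: EE_0)
next
  case (Suc n)
  have "EE d (n + 1) (\<lambda>_. 1) = 1" by (simp only: EE_split) (simp add: EE_1[simplified] Suc)
  then show ?case by simp
qed

lemma EE_bool: "EE d n (\<lambda>e. \<phi> (T e)) = \<phi> True * EE d n (\<lambda>e. of_bool (T e)) + \<phi> False * (1 - EE d n (\<lambda>e. of_bool (T e)))"
proof -
  have "EE d n (\<lambda>e. \<phi> (T e)) = EE d n (\<lambda>e. \<phi> True * of_bool (T e) + \<phi> False * (1 - of_bool (T e)))"
    by (rule EE_cong) auto
  also have "\<dots> = \<phi> True * EE d n (\<lambda>e. of_bool (T e)) + \<phi> False * (EE d n (\<lambda>_. 1) - EE d n (\<lambda>e. of_bool (T e)))"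
    unfolding EE_def by (simp add: algebra_simps sum.distrib sum_distrib_left sum_subtractf)
  finally show ?thesis by (simp add: EE_const1)
qed

lemma EE_step: "EE d (n + m) (\<lambda>es. \<phi> (T (take n es)) (drop n es)) =
   EE d n (\<lambda>e. of_bool (T e)) * EE d m (\<phi> True) + (1 - EE d n (\<lambda>e. of_bool (T e))) * EE d m (\<phi> False)"
proof -
  have "EE d (n + m) (\<lambda>es. \<phi> (T (take n es)) (drop n es)) = EE d n (\<lambda>a. (\<lambda>v. EE d m (\<phi> v)) (T a))"
    unfolding EE_split by (rule EE_cong) simp
  also have "\<dots> = EE d m (\<phi> True) * EE d n (\<lambda>e. of_bool (T e)) + EE d m (\<phi> False) * (1 - EE d n (\<lambda>e. of_bool (T e)))" by (rule EE_bool)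
  finally show ?thesis by (simp add: mult.commute)
qed

lemma EE_bounds: "0 \<le> d \<Longrightarrow> d \<le> 1 \<Longrightarrow> (\<And>e. 0 \<le> h e \<and> h e \<le> 1) \<Longrightarrow> 0 \<le> EE d n h \<and> EE d n h \<le> 1"
proof -
  assume d: "0 \<le> d" "d \<le> 1" and h: "\<And>e. 0 \<le> h e \<and> h e \<le> 1"
  have "0 \<le> EE d n h" unfolding EE_def using pp_nonneg[OF d] h by (intro sum_nonneg) auto
  moreover have "EE d n h \<le> EE d n (\<lambda>_. 1)" unfolding EE_def using pp_nonneg[OF d] h
    by (intro sum_mono) (simp add: mult_left_le)
  ultimately show ?thesis by (simp add: EE_const1)
qed


definition Mf :: "real \<Rightarrow> real \<Rightarrow> real \<Rightarrow> real" where
  "Mf a b c = (1-a)*(1-b)*(1-c) + a*(1-b)*(1-c) + (1-a)*b*(1-c) + (1-a)*(1-b)*c"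

definition Q :: "real \<Rightarrow> bool list \<Rightarrow> tr \<Rightarrow> real" where
  "Q d xs t = EE d (sz t) (\<lambda>es. of_bool (teval xs t es))"

lemma teval_take: "sz t \<le> length es \<Longrightarrow> teval xs t es = teval xs t (take (sz t) es)"
  using teval_prefix[of t "take (sz t) es" xs "drop (sz t) es"] by simp

lemma Q_Nd: "Q d xs (Nd a b c) = Mf (Q d xs a) (Q d xs b) (Q d xs c) + d * (1 - 2 * Mf (Q d xs a) (Q d xs b) (Q d xs c))"
proof -
  define Om where "Om = (\<lambda>v1 v2 v3 (r::bool list). of_bool (min3 v1 v2 v3 \<noteq> r ! 0) :: real)"
  define Ps where "Ps = (\<lambda>v1 v2 r. Om v1 v2 (teval xs c (take (sz c) r)) (drop (sz c) r))"
  define Ph where "Ph = (\<lambda>v1 r. Ps v1 (teval xs b (take (sz b) r)) (drop (sz b) r))"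
  define qa where "qa = Q d xs a"
  define qb where "qb = Q d xs b"
  define qc where "qc = Q d xs c"
  have "Q d xs (Nd a b c) = EE d (sz a + (sz b + (sz c + 1))) (\<lambda>es. of_bool (teval xs (Nd a b c) es))"
    unfolding Q_def by (simp add: ac_simps)
  also have "\<dots> = EE d (sz a + (sz b + (sz c + 1))) (\<lambda>es. Ph (teval xs a (take (sz a) es)) (drop (sz a) es))"
  proof (rule EE_cong)
    fix es :: "bool list" assume l: "length es = sz a + (sz b + (sz c + 1))"
    have 1: "teval xs a es = teval xs a (take (sz a) es)" using l teval_take[of a es] by simp
    have 2: "teval xs b (drop (sz a) es) = teval xs b (take (sz b) (drop (sz a) es))"
      using l teval_take[of b "drop (sz a) es"] by simp
    have 3: "teval xs c (drop (sz a + sz b) es) = teval xs c (take (sz c) (drop (sz b) (drop (sz a) es)))"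
      using l teval_take[of c "drop (sz a + sz b) es"] by (simp add: add.commute)
    have 4: "es ! (sz a + sz b + sz c) = drop (sz c) (drop (sz b) (drop (sz a) es)) ! 0"
      using l by (simp add: ac_simps)
    show "of_bool (teval xs (Nd a b c) es) = Ph (teval xs a (take (sz a) es)) (drop (sz a) es)"
      unfolding Ph_def Ps_def Om_def using 1 2 3 4 by (simp add: ac_simps)
  qed
  also have "\<dots> = qa * EE d (sz b + (sz c + 1)) (Ph True) + (1 - qa) * EE d (sz b + (sz c + 1)) (Ph False)"
    using EE_step[of d "sz a" "sz b + (sz c + 1)" Ph "teval xs a"] by (simp add: qa_def Q_def)
  finally have X: "Q d xs (Nd a b c) = qa * EE d (sz b + (sz c + 1)) (Ph True) + (1 - qa) * EE d (sz b + (sz c + 1)) (Ph False)" .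
  have H1: "\<And>v1. EE d (sz b + (sz c + 1)) (Ph v1) = qb * EE d (sz c + 1) (Ps v1 True) + (1 - qb) * EE d (sz c + 1) (Ps v1 False)"
    using EE_step[of d "sz b" "sz c + 1" _ "teval xs b"] by (simp add: qb_def Q_def Ph_def)
  have H2: "\<And>v1 v2. EE d (sz c + 1) (Ps v1 v2) = qc * EE d 1 (Om v1 v2 True) + (1 - qc) * EE d 1 (Om v1 v2 False)"
    using EE_step[of d "sz c" 1 _ "teval xs c"] by (simp add: qc_def Q_def Ps_def)
  have H3: "\<And>v1 v2 v3. EE d 1 (Om v1 v2 v3) = (1 - d) * of_bool (min3 v1 v2 v3) + d * of_bool (\<not> min3 v1 v2 v3)"
    by (simp add: EE_1[simplified] Om_def)
  show ?thesis
    unfolding X H1 H2 H3 qa_def[symmetric] qb_def[symmetric] qc_def[symmetric] Mf_def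
    by (simp add: min3_def algebra_simps)
qed


lemma Q_bounds: "0 \<le> d \<Longrightarrow> d \<le> 1 \<Longrightarrow> 0 \<le> Q d xs t \<and> Q d xs t \<le> 1"
  unfolding Q_def by (rule EE_bounds) auto

lemma Mf_bounds: "0 \<le> a \<Longrightarrow> a \<le> 1 \<Longrightarrow> 0 \<le> b \<Longrightarrow> b \<le> 1 \<Longrightarrow> 0 \<le> c \<Longrightarrow> c \<le> 1 \<Longrightarrow> 0 \<le> Mf a b c \<and> Mf a b c \<le> 1"
proof -
  assume h: "0 \<le> a" "a \<le> 1" "0 \<le> b" "b \<le> 1" "0 \<le> c" "c \<le> 1"
  have "0 \<le> Mf a b c" unfolding Mf_def using h by (intro add_nonneg_nonneg mult_nonneg_nonneg) auto
  moreover have "1 - Mf a b c = a*b*(1-c) + a*(1-b)*c + (1-a)*b*c + a*b*c" unfolding Mf_def by algebra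
  moreover have "0 \<le> a*b*(1-c) + a*(1-b)*c + (1-a)*b*c + a*b*c" using h by (intro add_nonneg_nonneg mult_nonneg_nonneg) auto
  ultimately show ?thesis by linarith
qed

lemma Mf_lip1: "0 \<le> b \<Longrightarrow> b \<le> 1 \<Longrightarrow> 0 \<le> c \<Longrightarrow> c \<le> 1 \<Longrightarrow> \<bar>Mf a b c - Mf a' b c\<bar> \<le> \<bar>a - a'\<bar>"
proof -
  assume h: "0 \<le> b" "b \<le> 1" "0 \<le> c" "c \<le> 1"
  have e: "Mf a b c - Mf a' b c = (a - a') * (- (b*(1-c) + c*(1-b)))" unfolding Mf_def by algebra
  have "0 \<le> b*(1-c) + c*(1-b)" using h by (intro add_nonneg_nonneg mult_nonneg_nonneg) auto
  moreover have "b*(1-c) + c*(1-b) \<le> 1*(1-c) + c*1"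
    using h by (intro add_mono mult_right_mono mult_left_mono) auto
  ultimately have "\<bar>- (b*(1-c) + c*(1-b))\<bar> \<le> 1" by simp
  then have "\<bar>a - a'\<bar> * \<bar>- (b*(1-c) + c*(1-b))\<bar> \<le> \<bar>a - a'\<bar> * 1" by (intro mult_left_mono) auto
  then show ?thesis unfolding e abs_mult by simp
qed

lemma Mf_sym: "Mf a b c = Mf b a c" "Mf a b c = Mf c b a"
  unfolding Mf_def by algebra+

lemma Mf_lip: assumes "0 \<le> a" "a \<le> 1" "0 \<le> b" "b \<le> 1" "0 \<le> c" "c \<le> 1"
  "0 \<le> a'" "a' \<le> 1" "0 \<le> b'" "b' \<le> 1" "0 \<le> c'" "c' \<le> 1"
  shows "\<bar>Mf a b c - Mf a' b' c'\<bar> \<le> \<bar>a - a'\<bar> + \<bar>b - b'\<bar> + \<bar>c - c'\<bar>"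
proof -
  have 1: "\<bar>Mf a b c - Mf a' b c\<bar> \<le> \<bar>a - a'\<bar>" using assms Mf_lip1 by auto
  have 2: "\<bar>Mf a' b c - Mf a' b' c\<bar> \<le> \<bar>b - b'\<bar>" using assms Mf_lip1[of a' c b b'] Mf_sym(1) by metis
  have 3: "\<bar>Mf a' b' c - Mf a' b' c'\<bar> \<le> \<bar>c - c'\<bar>" using assms Mf_lip1[of b' a' c c'] Mf_sym(2) by metis
  show ?thesis using 1 2 3 by linarith
qed

lemma Mf_bool: "Mf (of_bool v1) (of_bool v2) (of_bool v3) = of_bool (min3 v1 v2 v3)"
  by (cases v1; cases v2; cases v3) (simp_all add: Mf_def min3_def)

lemma Mf_amp: assumes "0 \<le> a" "a \<le> 1" "\<bar>a - of_bool v\<bar> \<le> q"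
  shows "\<bar>Mf a a a - of_bool (\<not> v)\<bar> \<le> 3 * q^2"
proof (cases v)
  case True
  then have q: "1 - a \<le> q" using assms by simp
  have e: "Mf a a a = (1-a)^2 * (1 + 2*a)" unfolding Mf_def by algebra
  have "(1-a)^2 \<le> q^2" using q assms by (intro power_mono) auto
  moreover have "0 \<le> (1-a)^2 * (1 + 2*a)" using assms by simp
  moreover have "(1-a)^2 * (1 + 2*a) \<le> (1-a)^2 * 3" using assms by (intro mult_left_mono) auto
  ultimately show ?thesis using True e by simp
next
  case False
  then have q: "a \<le> q" using assms by simp
  have e: "1 - Mf a a a = a^2 * (3 - 2*a)" unfolding Mf_def by algebra
  have "a^2 \<le> q^2" using q assms by (intro power_mono) auto
  moreover have "0 \<le> a^2 * (3 - 2*a)" using assms by simp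
  moreover have "a^2 * (3 - 2*a) \<le> a^2 * 3" using assms by (intro mult_left_mono) auto
  ultimately show ?thesis using False e by simp
qed

lemma noise_step: "0 \<le> (m::real) \<Longrightarrow> m \<le> 1 \<Longrightarrow> 0 \<le> d \<Longrightarrow> \<bar>m + d * (1 - 2*m) - w\<bar> \<le> \<bar>m - w\<bar> + d"
proof -
  assume h: "0 \<le> m" "m \<le> 1" "0 \<le> d"
  have "\<bar>1 - 2*m\<bar> \<le> 1" using h by linarith
  then have "d * \<bar>1 - 2*m\<bar> \<le> d * 1" using h by (intro mult_left_mono) auto
  then have "\<bar>d * (1 - 2*m)\<bar> \<le> d" using h by (simp add: abs_mult)
  then show ?thesis by linarith
qed


fun ide :: "bool list \<Rightarrow> tr \<Rightarrow> bool" where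
  "ide xs (V i) = xs ! i" | "ide xs (K b) = b"
| "ide xs (Nd a b c) = min3 (ide xs a) (ide xs b) (ide xs c)"

definition amp :: "tr \<Rightarrow> tr" where
  "amp s = Nd (Nd s s s) (Nd s s s) (Nd s s s)"

fun rob :: "tr \<Rightarrow> tr" where
  "rob (V i) = V i" | "rob (K b) = K b"
| "rob (Nd a b c) = amp (Nd (rob a) (rob b) (rob c))"

lemma vok_rob: "vok n t \<Longrightarrow> vok n (rob t)"
  by (induction t) (auto simp: amp_def)

lemma sq_bound: "0 \<le> d \<Longrightarrow> d \<le> 1/200 \<Longrightarrow> k \<le> 200 \<Longrightarrow> k * d^2 \<le> (d::real)"
proof -
  assume h: "0 \<le> d" "d \<le> 1/200" "k \<le> 200"
  have "k * d^2 \<le> 200 * d^2" using h by (intro mult_right_mono) auto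
  also have "\<dots> = d * (200 * d)" by (simp add: power2_eq_square)
  also have "\<dots> \<le> d * 1" using h by (intro mult_left_mono) auto
  finally show ?thesis by simp
qed

lemma rob_bound: assumes d: "0 \<le> d" "d \<le> 1/200"
  shows "\<bar>Q d xs (rob t) - of_bool (ide xs t)\<bar> \<le> 2 * d"
proof (induction t)
  case (V i) then show ?case using d by (simp add: Q_def EE_0)
next
  case (K b) then show ?case using d by (simp add: Q_def EE_0)
next
  case (Nd a b c)
  have d1: "0 \<le> d" "d \<le> 1" using d by auto
  define s where "s = Nd (rob a) (rob b) (rob c)"
  define w where "w = min3 (ide xs a) (ide xs b) (ide xs c)"
  let ?qa = "Q d xs (rob a)" let ?qb = "Q d xs (rob b)" let ?qc = "Q d xs (rob c)"
  have ba: "0 \<le> ?qa \<and> ?qa \<le> 1" "0 \<le> ?qb \<and> ?qb \<le> 1" "0 \<le> ?qc \<and> ?qc \<le> 1"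
    using Q_bounds[OF d1] by auto
  have "\<bar>Mf ?qa ?qb ?qc - Mf (of_bool (ide xs a)) (of_bool (ide xs b)) (of_bool (ide xs c))\<bar>
     \<le> \<bar>?qa - of_bool (ide xs a)\<bar> + \<bar>?qb - of_bool (ide xs b)\<bar> + \<bar>?qc - of_bool (ide xs c)\<bar>"
    using ba by (intro Mf_lip) auto
  then have m1: "\<bar>Mf ?qa ?qb ?qc - of_bool w\<bar> \<le> 6 * d" using Nd.IH unfolding Mf_bool w_def by linarith
  have "\<bar>Q d xs s - of_bool w\<bar> \<le> \<bar>Mf ?qa ?qb ?qc - of_bool w\<bar> + d"
    unfolding s_def Q_Nd using ba Mf_bounds d by (intro noise_step) auto
  with m1 have e1: "\<bar>Q d xs s - of_bool w\<bar> \<le> 7 * d" by linarith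
  define N where "N = Nd s s s"
  have bs: "0 \<le> Q d xs s" "Q d xs s \<le> 1" using Q_bounds[OF d1] by auto
  have "\<bar>Mf (Q d xs s) (Q d xs s) (Q d xs s) - of_bool (\<not> w)\<bar> \<le> 3 * (7*d)^2"
    using bs e1 by (intro Mf_amp) auto
  moreover have "3 * (7*d)^2 = 147 * d^2" by (simp add: power2_eq_square)
  moreover have "\<bar>Q d xs N - of_bool (\<not> w)\<bar> \<le> \<bar>Mf (Q d xs s) (Q d xs s) (Q d xs s) - of_bool (\<not> w)\<bar> + d"
    unfolding N_def Q_Nd using bs Mf_bounds d by (intro noise_step) auto
  moreover have "147 * d^2 \<le> d" using sq_bound d by auto
  ultimately have e2: "\<bar>Q d xs N - of_bool (\<not> w)\<bar> \<le> 2 * d" by linarith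
  have bN: "0 \<le> Q d xs N" "Q d xs N \<le> 1" using Q_bounds[OF d1] by auto
  have "\<bar>Mf (Q d xs N) (Q d xs N) (Q d xs N) - of_bool (\<not> \<not> w)\<bar> \<le> 3 * (2*d)^2"
    using bN e2 by (intro Mf_amp) auto
  moreover have "3 * (2*d)^2 = 12 * d^2" by (simp add: power2_eq_square)
  moreover have "\<bar>Q d xs (Nd N N N) - of_bool w\<bar> \<le> \<bar>Mf (Q d xs N) (Q d xs N) (Q d xs N) - of_bool w\<bar> + d"
    unfolding Q_Nd using bN Mf_bounds d by (intro noise_step) auto
  moreover have "12 * d^2 \<le> d" using sq_bound d by auto
  ultimately have "\<bar>Q d xs (Nd N N N) - of_bool w\<bar> \<le> 2 * d" by simp
  then show ?case by (simp add: amp_def N_def s_def w_def)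
qed

definition NOTt :: "tr \<Rightarrow> tr" where "NOTt t = Nd t (K True) (K False)"
definition NAND :: "tr \<Rightarrow> tr \<Rightarrow> tr" where "NAND x y = Nd x y (K False)"
definition MUX :: "tr \<Rightarrow> tr \<Rightarrow> tr \<Rightarrow> tr" where "MUX c x y = NAND (NAND c x) (NAND (NOTt c) y)"

fun bld :: "nat \<Rightarrow> (bool list \<Rightarrow> bool) \<Rightarrow> tr" where
  "bld 0 F = NOTt (K (\<not> F []))"
| "bld (Suc m) F = MUX (V m) (bld m (\<lambda>ys. F (ys @ [True]))) (bld m (\<lambda>ys. F (ys @ [False])))"

lemma ide_MUX: "ide xs (MUX c x y) = (if ide xs c then ide xs x else ide xs y)"
  by (auto simp: MUX_def NAND_def NOTt_def min3_def)

lemma vok_bld: "vok m (bld m F)"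
proof (induction m arbitrary: F)
  case 0 then show ?case by (simp add: NOTt_def)
next
  case (Suc m)
  have "vok (Suc m) t" if "vok m t" for t using that by (induction t) auto
  then show ?case using Suc by (simp add: MUX_def NAND_def NOTt_def)
qed

lemma ide_append: "vok (length ys) t \<Longrightarrow> ide (ys @ zs) t = ide ys t"
  by (induction t) (auto simp: nth_append)

lemma ide_bld: "length xs = m \<Longrightarrow> ide xs (bld m F) = F xs"
proof (induction m arbitrary: F xs)
  case 0 then show ?case by (simp add: NOTt_def min3_def)
next
  case (Suc m)
  obtain ys x where xs: "xs = ys @ [x]" "length ys = m" using Suc.prems by (metis length_Suc_conv_rev)
  have "ide xs (bld m G) = G ys" for G
    using ide_append[of ys "bld m G" "[x]"] vok_bld[of m G] Suc.IH[of ys G] xs by simp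
  then show ?case using xs by (cases x) (auto simp: ide_MUX nth_append)
qed

lemma bld_Nd: "\<exists>a b c. bld m F = Nd a b c"
  by (cases m) (auto simp: MUX_def NAND_def NOTt_def)

lemma rob_Nd: "\<exists>a b c. rob (Nd a0 b0 c0) = Nd a b c"
  by (simp add: amp_def)

theorem theorem3p2:
  shows "\<exists>\<delta>0::real. \<delta>0 > 0 \<and>
    (\<forall>\<delta>::real. 0 \<le> \<delta> \<and> \<delta> < \<delta>0 \<longrightarrow>
      (\<exists>\<epsilon>::real. \<epsilon> > 0 \<and>
        (\<forall>(n::nat) (f::bool list \<Rightarrow> bool). \<exists>C. wf_circuit n C \<and>
           (\<forall>xs. length xs = n \<longrightarrow> err_prob \<delta> C f xs \<le> 1/2 - \<epsilon>))))"
proof (rule exI[of _ "1/200"], intro conjI allI impI)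
  fix \<delta> :: real assume dd: "0 \<le> \<delta> \<and> \<delta> < 1/200"
  then have d: "0 \<le> \<delta>" "\<delta> \<le> 1/200" "\<delta> \<le> 1" by auto
  show "\<exists>\<epsilon>::real. \<epsilon> > 0 \<and>
        (\<forall>(n::nat) (f::bool list \<Rightarrow> bool). \<exists>C. wf_circuit n C \<and>
           (\<forall>xs. length xs = n \<longrightarrow> err_prob \<delta> C f xs \<le> 1/2 - \<epsilon>))"
  proof (rule exI[of _ "1/4"], intro conjI allI)
    fix n :: nat and f :: "bool list \<Rightarrow> bool"
    define T where "T = rob (bld n f)"
    obtain a b c where T: "T = Nd a b c" using bld_Nd[of n f] rob_Nd T_def by metis
    have vT: "vok n T" unfolding T_def by (intro vok_rob vok_bld)
    show "\<exists>C. wf_circuit n C \<and> (\<forall>xs. length xs = n \<longrightarrow> err_prob \<delta> C f xs \<le> 1/2 - 1/4)"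
    proof (intro exI[of _ "gates T 0"] conjI allI impI)
      show "wf_circuit n (gates T 0)" using wf_gates[OF vT T] .
      fix xs :: "bool list" assume l: "length xs = n"
      have "err_prob \<delta> (gates T 0) f xs = EE \<delta> (sz T) (\<lambda>es. of_bool (teval xs T es \<noteq> f xs))"
      proof -
        have "err_prob \<delta> (gates T 0) f xs =
            (\<Sum>es \<in> {es. length es = sz T}. if circ_out (gates T 0) xs es \<noteq> f xs then pattern_prob \<delta> es else 0)"
          unfolding err_prob_def using sum.inter_filter[OF fin_L[of "sz T"], where g="pattern_prob \<delta>" and P="\<lambda>es. circ_out (gates T 0) xs es \<noteq> f xs"]
          by (simp add: conj_commute)
        also have "\<dots> = EE \<delta> (sz T) (\<lambda>es. of_bool (teval xs T es \<noteq> f xs))"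
          unfolding EE_def by (rule sum.cong) (auto simp: circ_out_gates[OF T])
        finally show ?thesis .
      qed
      also have "\<dots> = of_bool (True \<noteq> f xs) * Q \<delta> xs T + of_bool (False \<noteq> f xs) * (1 - Q \<delta> xs T)"
        unfolding Q_def by (rule EE_bool)
      also have "\<dots> = \<bar>Q \<delta> xs T - of_bool (f xs)\<bar>"
        using Q_bounds[OF d(1) d(3), of xs T] by (cases "f xs") auto
      also have "\<dots> \<le> 2 * \<delta>" using rob_bound[OF d(1,2), of xs "bld n f"] ide_bld[OF l] T_def by simp
      also have "\<dots> \<le> 1/2 - 1/4" using d by simp
      finally show "err_prob \<delta> (gates T 0) f xs \<le> 1/2 - 1/4" .
    qed
  qed simp
qed simp

end
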